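(* Let $f_{AN_2}(x)=\frac{x+1}{2}-\left(\frac{\sqrt x+1}{2}\right)\sqrt{\frac{x+1}{2}}$ for $x\in(0,\infty)$, let $f_{AN_2}^*(u)=u\,f_{AN_2}\!\left(\frac{1-u}{u}\right)$ for $u\in(0,1)$, extended by continuity to $[0,1]$ (explicitly $f_{AN_2}^*(u)=\frac12-\frac{\sqrt2}{4}\left(\sqrt u+\sqrt{1-u}\right)$), and define $\overline M_{AN_2}(C_1,C_2)=E_X\{f_{AN_2}^*(P(C_2\mid x))\}$. Then $$P_e\le \frac12\left[1-\frac{4}{2-\sqrt2}\,\overline M_{AN_2}(C_1,C_2)\right].$$
   Context: Two-class decision problem: classes $C_1,C_2$, an observation $x$ in a space $\mathrm X$ with density $p(x)$, and a posteriori probabilities $P(C_1\mid x),P(C_2\mid x)\ge0$ with $P(C_1\mid x)+P(C_2\mid x)=1$. $E_X\{g(x)\}=\int_{\mathrm X} g(x)p(x)\,dx$. $P_e=E_X\{\min(P(C_1\mid x),P(C_2\mid x))\}$ is the Bayesian probability of error. *)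

theory Defs
  imports "HOL-Analysis.Analysis"
begin

definition fAN2 :: "real \<Rightarrow> real" where
  "fAN2 x = (x + 1) / 2 - ((sqrt x + 1) / 2) * sqrt ((x + 1) / 2)"

definition fAN2star :: "real \<Rightarrow> real" where
  "fAN2star u = (if 0 < u \<and> u < 1 then u * fAN2 ((1 - u) / u)
                 else 1/2 - sqrt 2 / 4 * (sqrt u + sqrt (1 - u)))"

text \<open>Expectation w.r.t. the density p on the observation space (reference measure M, i.e. dx).\<close>
definition ExpX :: "'a measure \<Rightarrow> ('a \<Rightarrow> real) \<Rightarrow> ('a \<Rightarrow> real) \<Rightarrow> real" where
  "ExpX M p g = (\<integral>x. g x * p x \<partial>M)"

definition Pe :: "'a measure \<Rightarrow> ('a \<Rightarrow> real) \<Rightarrow> ('a \<Rightarrow> real) \<Rightarrow> ('a \<Rightarrow> real) \<Rightarrow> real" where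
  "Pe M p P1 P2 = ExpX M p (\<lambda>x. min (P1 x) (P2 x))"

definition MAN2 :: "'a measure \<Rightarrow> ('a \<Rightarrow> real) \<Rightarrow> ('a \<Rightarrow> real) \<Rightarrow> ('a \<Rightarrow> real) \<Rightarrow> real" where
  "MAN2 M p P1 P2 = ExpX M p (\<lambda>x. fAN2star (P2 x))"

end

theory Submission imports Defs begin
lemma key:
  fixes a b :: real
  assumes a0: "0 \<le> a" and ar: "sqrt 2 * a \<le> 1" and b0: "b \<ge> 0" and ab: "a^2 + b^2 = 1"
  shows "2*(sqrt 2 - 1)*a^2 \<le> a + b - 1"
proof -
  define r where "r = sqrt 2"
  have r2: "r*r = 2" unfolding r_def by simp
  have rb1: "(141/100) < r" unfolding r_def by (rule real_less_rsqrt) (simp add: power2_eq_square)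
  have rb2: "r < (142/100)"
  proof (rule ccontr)
    assume "\<not> r < (142/100)" hence "(142/100) \<le> r" by simp
    hence "(142/100)*(142/100) \<le> r*r" by (intro mult_mono) auto
    thus False using r2 by simp
  qed
  have ra: "r*a \<le> 1" using ar r_def by simp
  have a1: "a * (141/100) \<le> 1" using ra rb1 a0 by (smt (verit) mult_left_mono mult.commute)
  have h: "2 + (2-2*r)*a + (6*r-8)*a^2 \<ge> 0"
  proof -
    have "(6*r-8)*a^2 \<ge> 0" using rb1 by simp
    moreover have "(2*r-2)*a \<le> (84/100) * a" using rb2 a0 by (intro mult_right_mono) auto
    moreover have "2 + (2-2*r)*a + (6*r-8)*a^2 = 2 - ((2*r-2)*a) + (6*r-8)*a^2" by algebra
    moreover have "\<And>X Y::real. Y \<ge> 0 \<Longrightarrow> X \<le> (84/100)*a \<Longrightarrow> 0 \<le> 2 - X + Y" using a1 a0 by linarith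
    ultimately show ?thesis by metis
  qed
  define q where "q = 1 - a + (2*r-2)*a^2"
  have qid: "(1 - a^2) - q^2 = a * (1 - r*a) * (2 + (2-2*r)*a + (6*r-8)*a^2)"
  proof -
    have "(1 - a^2) - q^2 - a * (1 - r*a) * (2 + (2-2*r)*a + (6*r-8)*a^2) = (r*r-2)*(2*a^4-2*a^3)"
      unfolding q_def by algebra
    thus ?thesis using r2 by simp
  qed
  have "0 \<le> a * (1 - r*a) * (2 + (2-2*r)*a + (6*r-8)*a^2)"
    using h ra a0 by (intro mult_nonneg_nonneg) auto
  hence "q^2 \<le> b^2" using qid ab by linarith
  hence "\<bar>q\<bar> \<le> \<bar>b\<bar>" by (simp add: abs_le_square_iff)
  hence "q \<le> b" using b0 by linarith
  thus ?thesis unfolding q_def r_def by simp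
qed


lemma point:
  fixes u :: real
  assumes "0 \<le> u" "u \<le> 1"
  shows "min u (1-u) \<le> 1/2 * (1 - 4 / (2 - sqrt 2) * (1/2 - sqrt 2 / 4 * (sqrt u + sqrt (1 - u))))"
proof -
  define s where "s = sqrt u + sqrt (1-u)"
  have m: "2*(sqrt 2 - 1)* min u (1-u) \<le> s - 1"
  proof (cases "u \<le> 1/2")
    case True
    have "sqrt 2 * sqrt u \<le> 1" using True assms
      by (metis real_sqrt_le_1_iff real_sqrt_mult mult.commute le_divide_eq_numeral1(1) mult_2_right one_add_one linorder_not_le mult.right_neutral)
    from key[OF _ this, of "sqrt (1-u)"] assms True show ?thesis unfolding s_def by simp
  next
    case False
    have "sqrt 2 * sqrt (1-u) \<le> 1" using False assms
      by (simp add: real_sqrt_mult[symmetric])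
    from key[OF _ this, of "sqrt u"] assms False show ?thesis unfolding s_def by simp
  qed
  have r: "sqrt 2 * sqrt 2 = 2" by simp
  have r1: "sqrt 2 > 1" by simp
  have pos: "2 - sqrt 2 > 0" using r r1 by (smt (verit) real_sqrt_less_iff real_sqrt_four)
  have "(4 - 2 * sqrt 2) * min u (1-u) \<le> sqrt 2 * (s - 1)"
  proof -
    have "sqrt 2*(2*(sqrt 2-1)*min u (1-u)) = 2*(sqrt 2* sqrt 2)*min u (1-u) - 2* sqrt 2*min u (1-u)" by algebra
    also have "\<dots> = (4 - 2 * sqrt 2) * min u (1-u)" unfolding r by algebra
    finally have "sqrt 2*(2*(sqrt 2-1)*min u (1-u)) = (4 - 2 * sqrt 2) * min u (1-u)" .
    moreover have "sqrt 2*(2*(sqrt 2-1)*min u (1-u)) \<le> sqrt 2 * (s - 1)"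
      by (rule mult_left_mono[OF m]) simp
    ultimately show ?thesis by linarith
  qed
  thus ?thesis using pos unfolding s_def[symmetric]
    by (simp add: field_simps)
qed

lemma aux: fixes v c w :: real assumes "v > 0" "c > 0"
  shows "(v * v) * (1 / (2 * (v * v)) - ((w / v + 1) / 2) * (1 / (c * v))) = 1 / 2 - (w + v) / (2 * c)"
  using assms by (simp add: field_simps)

lemma fstar_eq:
  fixes u :: real
  assumes "0 \<le> u" "u \<le> 1"
  shows "fAN2star u = 1/2 - sqrt 2 / 4 * (sqrt u + sqrt (1 - u))"
proof (cases "0 < u \<and> u < 1")
  case True
  hence u0: "0 < u" and u1: "u < 1" by auto
  have su: "sqrt u > 0" using u0 by simp
  have e1: "((1-u)/u + 1)/2 = 1/(2*u)" using u0 by (simp add: field_simps)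
  have e2: "sqrt ((1-u)/u) = sqrt (1-u) / sqrt u" by (simp add: real_sqrt_divide)
  have e3: "sqrt (1/(2*u)) = 1 / (sqrt 2 * sqrt u)" by (simp add: real_sqrt_divide real_sqrt_mult)
  have "fAN2star u = u * fAN2 ((1 - u) / u)" using True unfolding fAN2star_def by simp
  also have "\<dots> = u * (1/(2*u) - ((sqrt (1-u) / sqrt u + 1)/2) * (1 / (sqrt 2 * sqrt u)))"
    unfolding fAN2_def e1 e2 e3 by simp
  also have "\<dots> = 1/2 - (sqrt (1-u) + sqrt u) / (2 * sqrt 2)"
  proof -
    have uu: "u = sqrt u * sqrt u" using u0 by simp
    show ?thesis using aux[OF su, of "sqrt 2" "sqrt (1-u)"] uu by simp
  qed
  also have "\<dots> = 1/2 - sqrt 2 / 4 * (sqrt u + sqrt (1 - u))"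
  proof -
    have "1 / (2 * sqrt 2) = sqrt 2 / 4" by (simp add: field_simps)
    thus ?thesis by (metis (no_types, lifting) add.commute times_divide_eq_left mult.commute divide_divide_eq_left mult_1)
  qed
  finally show ?thesis .
next
  case False thus ?thesis unfolding fAN2star_def by auto
qed
theorem mainTheorem7:
  fixes M :: "'a measure" and p P1 P2 :: "'a \<Rightarrow> real"
  assumes p_meas: "p \<in> borel_measurable M"
    and p_nonneg: "\<And>x. x \<in> space M \<Longrightarrow> p x \<ge> 0"
    and p_int: "integrable M p"
    and p_total: "(\<integral>x. p x \<partial>M) = 1"
    and P1_meas: "P1 \<in> borel_measurable M"
    and P2_meas: "P2 \<in> borel_measurable M"
    and P1_nonneg: "\<And>x. x \<in> space M \<Longrightarrow> P1 x \<ge> 0"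
    and P2_nonneg: "\<And>x. x \<in> space M \<Longrightarrow> P2 x \<ge> 0"
    and P_sum: "\<And>x. x \<in> space M \<Longrightarrow> P1 x + P2 x = 1"
  shows "Pe M p P1 P2 \<le> 1/2 * (1 - 4 / (2 - sqrt 2) * MAN2 M p P1 P2)"
proof -
  define c where "c = 4 / (2 - sqrt 2)"
  define h where "h = (\<lambda>u::real. 1/2 - sqrt 2 / 4 * (sqrt u + sqrt (1 - u)))"
  have P2b: "0 \<le> P2 x" "P2 x \<le> 1" if "x \<in> space M" for x
    using P2_nonneg[OF that] P1_nonneg[OF that] P_sum[OF that] by auto
  have geq: "fAN2star (P2 x) = h (P2 x)" if "x \<in> space M" for x
    unfolding h_def using fstar_eq P2b[OF that] by blast
  have hm: "(\<lambda>x. h (P2 x)) \<in> borel_measurable M" unfolding h_def using P2_meas by measurable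
  have gm: "(\<lambda>x. fAN2star (P2 x)) \<in> borel_measurable M"
    using hm by (rule measurable_cong[THEN iffD1, rotated]) (simp add: geq)
  have hb: "\<bar>h u\<bar> \<le> 2" if "0 \<le> u" "u \<le> 1" for u
  proof -
    have s2: "sqrt 2 \<le> 2" using real_sqrt_le_mono[of 2 4] by simp
    have "sqrt u \<le> 1" "sqrt (1-u) \<le> 1" "sqrt 2 \<le> 2" using that s2 by auto
    moreover have "sqrt u \<ge> 0" "sqrt (1-u) \<ge> 0" "sqrt 2 \<ge> 0" using that by auto
    ultimately have "sqrt 2 / 4 * (sqrt u + sqrt (1 - u)) \<le> 2/4 * 2"
      by (intro mult_mono) linarith+
    moreover have "sqrt 2 / 4 * (sqrt u + sqrt (1 - u)) \<ge> 0" using \<open>sqrt u \<ge> 0\<close> \<open>sqrt (1-u) \<ge> 0\<close> by simp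
    ultimately show ?thesis unfolding h_def by linarith
  qed
  have int_g: "integrable M (\<lambda>x. fAN2star (P2 x) * p x)"
  proof (rule Bochner_Integration.integrable_bound[of _ "\<lambda>x. 2 * p x"])
    show "integrable M (\<lambda>x. 2 * p x)" using p_int by simp
    show "(\<lambda>x. fAN2star (P2 x) * p x) \<in> borel_measurable M" using gm p_meas by measurable
    show "AE x in M. norm (fAN2star (P2 x) * p x) \<le> norm (2 * p x)"
    proof (rule AE_I2)
      fix x assume x: "x \<in> space M"
      have "\<bar>fAN2star (P2 x)\<bar> * \<bar>p x\<bar> \<le> 2 * \<bar>p x\<bar>"
        using hb[OF P2b[OF x]] geq[OF x] by (intro mult_right_mono) auto
      thus "norm (fAN2star (P2 x) * p x) \<le> norm (2 * p x)" by (simp add: abs_mult)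
    qed
  qed
  have int_m: "integrable M (\<lambda>x. min (P1 x) (P2 x) * p x)"
  proof (rule Bochner_Integration.integrable_bound[of _ "\<lambda>x. p x"])
    show "integrable M (\<lambda>x. p x)" using p_int by simp
    show "(\<lambda>x. min (P1 x) (P2 x) * p x) \<in> borel_measurable M" using P1_meas P2_meas p_meas by measurable
    show "AE x in M. norm (min (P1 x) (P2 x) * p x) \<le> norm (p x)"
    proof (rule AE_I2)
      fix x assume x: "x \<in> space M"
      have "\<bar>min (P1 x) (P2 x)\<bar> * \<bar>p x\<bar> \<le> 1 * \<bar>p x\<bar>"
        using P2b[OF x] P1_nonneg[OF x] P_sum[OF x] by (intro mult_right_mono) auto
      thus "norm (min (P1 x) (P2 x) * p x) \<le> norm (p x)" by (simp add: abs_mult)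
    qed
  qed
  have int_r: "integrable M (\<lambda>x. 1/2 * p x - c/2 * (fAN2star (P2 x) * p x))"
    using int_g p_int by simp
  have "Pe M p P1 P2 = (\<integral>x. min (P1 x) (P2 x) * p x \<partial>M)" unfolding Pe_def ExpX_def ..
  also have "\<dots> \<le> (\<integral>x. 1/2 * p x - c/2 * (fAN2star (P2 x) * p x) \<partial>M)"
  proof (rule integral_mono[OF int_m int_r])
    fix x assume x: "x \<in> space M"
    have P1e: "P1 x = 1 - P2 x" using P_sum[OF x] by simp
    have "min (P1 x) (P2 x) \<le> 1/2 * (1 - c * fAN2star (P2 x))"
      using point[OF P2b[OF x]] geq[OF x] unfolding P1e c_def h_def by (simp add: min.commute)
    hence "min (P1 x) (P2 x) * p x \<le> 1/2 * (1 - c * fAN2star (P2 x)) * p x"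
      using p_nonneg[OF x] by (rule mult_right_mono)
    thus "min (P1 x) (P2 x) * p x \<le> 1/2 * p x - c/2 * (fAN2star (P2 x) * p x)"
      by (simp add: algebra_simps)
  qed
  also have "\<dots> = 1/2 * (\<integral>x. p x \<partial>M) - c/2 * (\<integral>x. fAN2star (P2 x) * p x \<partial>M)"
    using int_g p_int by simp
  also have "\<dots> = 1/2 * (1 - 4 / (2 - sqrt 2) * MAN2 M p P1 P2)"
  proof -
    have "\<And>I. c/2 * I = 1/2*(c*I)" by simp
    thus ?thesis unfolding p_total MAN2_def ExpX_def c_def[symmetric] by (simp add: right_diff_distrib)
  qed
  finally show ?thesis .
qed

end
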